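(* Let $\beta\in(0,1)$. There exists $C_\beta>0$ such that for every $N\in\mathbb{N}$, every minimizer $h\in\{1,\dots,N\}$ of $\mathcal{H}_{\beta,N}$ and every minimizer $l\in\{1,\dots,N\}$ of $\mathcal{L}_{\beta,N}$ satisfy $$|h-h_*|\le C_\beta N^{1/4},\qquad |l-l_*|\le C_\beta N^{1/4},$$ where $h_*=(1-\beta)^{1/2}N^{1/2}$ and $l_*=(1-\beta)^{-1/2}N^{1/2}$. Moreover, if $\beta\notin\mathbb{Q}$, the minimizers of $\mathcal{H}_{\beta,N}$ and of $\mathcal{L}_{\beta,N}$ are unique.
   Context: For $N\in\mathbb{N}$ and $\beta\in(0,1)$ define $\mathcal{H}_{\beta,N},\mathcal{L}_{\beta,N}:\{1,\dots,N\}\to\mathbb{R}$ by $\mathcal{H}_{\beta,N}(h)=2h+2(1-\beta)\lceil N/h\rceil$ and $\mathcal{L}_{\beta,N}(l)=2\lceil N/l\rceil+2(1-\beta)l$. *)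

theory Defs
  imports Complex_Main
begin

definition calH :: "real \<Rightarrow> nat \<Rightarrow> nat \<Rightarrow> real" where
  "calH \<beta> N h = 2 * real h + 2 * (1 - \<beta>) * real_of_int \<lceil>real N / real h\<rceil>"

definition calL :: "real \<Rightarrow> nat \<Rightarrow> nat \<Rightarrow> real" where
  "calL \<beta> N l = 2 * real_of_int \<lceil>real N / real l\<rceil> + 2 * (1 - \<beta>) * real l"

definition is_minimizer :: "(nat \<Rightarrow> real) \<Rightarrow> nat \<Rightarrow> nat \<Rightarrow> bool" where
  "is_minimizer f N m \<longleftrightarrow> m \<in> {1..N} \<and> (\<forall>k\<in>{1..N}. f m \<le> f k)"

end

theory Submission
  imports Defs
begin

lemma r_facts:
  fixes N :: nat assumes "N \<ge> 1"
  shows "root 4 (real N) \<ge> 1" "sqrt (real N) = (root 4 (real N))^2"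
proof -
  have r4: "(root 4 (real N))^4 = real N" by (simp add: real_root_pow_pos2)
  show "root 4 (real N) \<ge> 1" using assms by simp
  have "((root 4 (real N))^2)^2 = real N" using r4 by (simp add: power_mult[symmetric])
  hence "sqrt (real N) = sqrt (((root 4 (real N))^2)^2)" by simp
  also have "\<dots> = (root 4 (real N))^2" by (simp only: real_sqrt_abs abs_power2)
  finally show "sqrt (real N) = (root 4 (real N))^2" by simp
qed

lemma H_part:
  fixes c :: real and N h :: nat
  assumes c: "0 < c" "c < 1" and N: "N \<ge> 1"
    and hmin: "is_minimizer (calH (1 - c) N) N h"
  shows "\<bar>real h - sqrt c * sqrt (real N)\<bar> \<le> 3 * root 4 (real N)"
proof -
  define hs where "hs = sqrt c * sqrt (real N)"
  have hs_pos: "hs > 0" using c N by (simp add: hs_def)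
  have hs2: "hs^2 = c * N" using c by (simp add: hs_def power_mult_distrib)
  have hsle: "hs \<le> sqrt (real N)" using c unfolding hs_def
    by (simp add: mult_left_le_one_le)
  have s1: "1 \<le> sqrt (real N)" using N by simp
  hence "1 * sqrt (real N) \<le> sqrt (real N) * sqrt (real N)" by (intro mult_right_mono) auto
  hence sN: "sqrt (real N) \<le> real N" by simp
  define k where "k = nat \<lceil>hs\<rceil>"
  have k1: "real k \<ge> hs" "real k < hs + 1" using hs_pos unfolding k_def
    by (auto simp: ceiling_correct) (linarith)
  have kpos: "k \<ge> 1" using k1 hs_pos by simp
  have kN: "k \<le> N" using hsle sN unfolding k_def
    by (simp add: nat_le_iff ceiling_le_iff)
  have h1: "h \<ge> 1" "h \<le> N" using hmin by (auto simp: is_minimizer_def)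
  have "calH (1 - c) N h \<le> calH (1 - c) N k" using hmin kpos kN by (auto simp: is_minimizer_def)
  moreover have "calH (1 - c) N h \<ge> 2 * h + 2 * c * (N / h)"
  proof -
    have "N / h \<le> real_of_int \<lceil>real N / real h\<rceil>" by (rule le_of_int_ceiling)
    hence "c * (N / h) \<le> c * real_of_int \<lceil>real N / real h\<rceil>" using c by (intro mult_left_mono) auto
    thus ?thesis unfolding calH_def by simp
  qed
  moreover have "calH (1 - c) N k \<le> 2 * k + 2 * c * (N / k + 1)"
  proof -
    have "real_of_int \<lceil>real N / real k\<rceil> \<le> N / k + 1" by linarith
    thus ?thesis unfolding calH_def using c by (simp add: mult_left_mono)
  qed
  ultimately have ineq: "2 * h + 2 * c * (N / h) \<le> 2 * k + 2 * c * (N / k) + 2 * c"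
    by (simp add: algebra_simps)
  have ident: "2 * x + 2 * c * (N / x) - 4 * hs = 2 * (x - hs)^2 / x" if "x > 0" for x :: real
    using that hs2 by (simp add: field_simps power2_eq_square)
  have "2 * (h - hs)^2 / h \<le> 2 * (k - hs)^2 / k + 2 * c"
    using ineq ident[of "real h"] ident[of "real k"] h1 kpos by simp
  moreover have "(k - hs)^2 \<le> 1" using k1 by (simp add: abs_square_le_1)
  moreover have "2 * (k - hs)^2 / k \<le> 2 * (k - hs)^2"
    using kpos by (simp add: divide_le_eq mult_le_cancel_left1)
  ultimately have "2 * (h - hs)^2 / h \<le> 4" using c by linarith
  hence sq: "(h - hs)^2 \<le> 2 * h" using h1 by (simp add: divide_le_eq)
  define r where "r = root 4 (real N)"
  have r1: "r \<ge> 1" and rr: "hs \<le> r^2" using r_facts[OF N] hsle by (auto simp: r_def)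
  show ?thesis
  proof (rule ccontr)
    assume "\<not> ?thesis"
    hence d: "\<bar>h - hs\<bar> > 3 * r" by (simp add: hs_def r_def)
    define d where "d = \<bar>h - hs\<bar>"
    have "real h \<le> hs + d" unfolding d_def by linarith
    moreover have "d^2 = (h - hs)^2" unfolding d_def by simp
    ultimately have "d^2 \<le> 2 * r^2 + 2 * d" using sq rr by linarith
    moreover have "d * (d - 2) > 3 * r * r" 
      using d r1 unfolding d_def[symmetric] by (intro mult_strict_mono) auto
    moreover have "1*1 \<le> r*r" using r1 by (intro mult_mono) auto
    ultimately show False by (simp add: power2_eq_square algebra_simps)
  qed
qed

lemma L_part:
  fixes c :: real and N l :: nat
  assumes c: "0 < c" "c < 1" and N: "N \<ge> 1"
    and lmin: "is_minimizer (calL (1 - c) N) N l"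
  shows "\<bar>real l - sqrt (real N) / sqrt c\<bar> \<le> (4 / c) * root 4 (real N)"
proof -
  define ls where "ls = sqrt (real N) / sqrt c"
  define r where "r = root 4 (real N)"
  have r1: "r \<ge> 1" and rr: "sqrt (real N) = r^2" using r_facts[OF N] by (auto simp: r_def)
  have ls_pos: "ls > 0" using c N by (simp add: ls_def)
  have ls2: "ls^2 = N / c" using c by (simp add: ls_def power_divide)
  have l1: "l \<ge> 1" "l \<le> N" using lmin by (auto simp: is_minimizer_def)
  have "sqrt c \<le> 1" using c by simp
  hence "sqrt c * sqrt c \<le> sqrt c * 1" using c by (intro mult_left_mono) auto
  hence sc: "c \<le> sqrt c" using c by simp
  have "c * ls \<le> sqrt c * ls" using sc ls_pos by (simp add: mult_right_mono)
  also have "sqrt c * ls = r^2" using c rr by (simp add: ls_def)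
  finally have cls: "c * ls \<le> r^2" .
  show ?thesis
  proof (cases "ls \<le> real N")
    case False
    hence "ls * real N < ls * ls" using ls_pos by (intro mult_strict_left_mono) auto
    hence "ls * real N < N / c" using ls2 by (simp add: power2_eq_square)
    hence "c * ls * real N < real N" using c by (simp add: field_simps)
    hence "c * ls < 1" using N by simp
    hence "ls < 1 / c" using c by (simp add: field_simps)
    moreover have "1 / c \<le> (4 / c) * r" using c r1 by (simp add: field_simps)
    moreover have "\<bar>real l - ls\<bar> \<le> ls" using l1 False by simp
    ultimately show ?thesis by (simp add: ls_def r_def)
  next
    case True
    define k where "k = nat \<lceil>ls\<rceil>"
    have k1: "real k \<ge> ls" "real k < ls + 1" using ls_pos unfolding k_def
      by (auto simp: ceiling_correct) (linarith)
    have kpos: "k \<ge> 1" using k1 ls_pos by simp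
    have kN: "k \<le> N" using True unfolding k_def
      by (simp add: nat_le_iff ceiling_le_iff)
    have "calL (1 - c) N l \<le> calL (1 - c) N k" using lmin kpos kN by (auto simp: is_minimizer_def)
    moreover have "calL (1 - c) N l \<ge> 2 * (N / l) + 2 * c * l"
    proof -
      have "N / l \<le> real_of_int \<lceil>real N / real l\<rceil>" by (rule le_of_int_ceiling)
      moreover have "calL (1 - c) N l = 2 * real_of_int \<lceil>real N / real l\<rceil> + 2 * c * l"
        unfolding calL_def by simp
      ultimately show ?thesis by (smt (verit))
    qed
    moreover have "calL (1 - c) N k \<le> 2 * (N / k + 1) + 2 * c * k"
    proof -
      have "real_of_int \<lceil>real N / real k\<rceil> \<le> N / k + 1" by linarith
      moreover have "calL (1 - c) N k = 2 * real_of_int \<lceil>real N / real k\<rceil> + 2 * c * k"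
        unfolding calL_def by simp
      ultimately show ?thesis by (smt (verit))
    qed
    ultimately have ineq: "2 * (N / l) + 2 * c * l \<le> 2 * (N / k) + 2 * c * k + 2"
      by (simp add: algebra_simps)
    have ident: "2 * (N / x) + 2 * c * x - 4 * c * ls = 2 * c * (x - ls)^2 / x" if "x > 0" for x :: real
      using that ls2 c by (simp add: field_simps power2_eq_square)
    have "2 * c * (l - ls)^2 / l \<le> 2 * c * (k - ls)^2 / k + 2"
      using ineq ident[of "real l"] ident[of "real k"] l1 kpos by simp
    moreover have "(k - ls)^2 \<le> 1" using k1 by (simp add: abs_square_le_1)
    moreover have "2 * c * (k - ls)^2 / k \<le> 2 * c * (k - ls)^2"
      using divide_left_mono[of 1 "real k" "2 * c * (k - ls)^2"] kpos c by simp
    moreover have "2 * c * (k - ls)^2 \<le> 2 * c * 1" using c \<open>(k - ls)^2 \<le> 1\<close> by simp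
    ultimately have "2 * c * (l - ls)^2 / l \<le> 4" using c by linarith
    hence sq: "c * (l - ls)^2 \<le> 2 * l" using l1 by (simp add: divide_le_eq)
    show ?thesis
    proof (rule ccontr)
      assume "\<not> ?thesis"
      hence d: "\<bar>l - ls\<bar> > (4 / c) * r" by (simp add: ls_def r_def)
      define D where "D = c * \<bar>l - ls\<bar>"
      have D4: "D > 4 * r" using d c unfolding D_def by (simp add: field_simps)
      have "c * (l - ls) \<le> c * \<bar>l - ls\<bar>" using c by (intro mult_left_mono) auto
      hence "c * real l \<le> c * ls + D" unfolding D_def by (simp add: algebra_simps)
      moreover have "D^2 = c * (c * (l - ls)^2)" unfolding D_def by (simp add: power2_eq_square algebra_simps)
      moreover have "c * (c * (l - ls)^2) \<le> c * (2 * l)" using sq c by (simp add: mult_left_mono)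
      ultimately have "D^2 \<le> 2 * r^2 + 2 * D" using cls by linarith
      moreover have "D * D > D * (4 * r)" using D4 r1 by (intro mult_strict_left_mono) auto
      moreover have "D * r \<ge> D" using D4 r1 by simp
      moreover have "D * r \<ge> 4 * r * r" using D4 r1 by (intro mult_right_mono) auto
      moreover have "1*1 \<le> r*r" using r1 by (intro mult_mono) auto
      ultimately show False by (simp add: power2_eq_square algebra_simps)
    qed
  qed
qed

lemma uniq_aux:
  fixes c :: real and x x' :: nat and a a' :: int
  assumes "c \<notin> \<rat>" "2 * real x + 2 * c * of_int a = 2 * real x' + 2 * c * of_int a'"
  shows "x = x'"
proof (cases "a = a'")
  case True thus ?thesis using assms by simp
next
  case False
  hence ne: "of_int a' - of_int a \<noteq> (0::real)" by simp
  have "c * (of_int a' - of_int a) = real x - real x'" using assms(2) by (simp add: algebra_simps)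
  hence "c = (real x - real x') / (of_int a' - of_int a)" using ne by (simp add: field_simps)
  moreover have "(real x - real x') / (of_int a' - of_int a) \<in> \<rat>"
    by (intro Rats_divide Rats_diff Rats_of_nat Rats_of_int)
  ultimately have "c \<in> \<rat>" by simp
  thus ?thesis using assms(1) by simp
qed

lemma min_eq:
  assumes "is_minimizer f N m" "is_minimizer f N m'" shows "f m = f m'"
  using assms unfolding is_minimizer_def by (intro antisym) auto

theorem lemma4p3:
  fixes \<beta> :: real
  assumes "0 < \<beta>" and "\<beta> < 1"
  shows "(\<exists>C>0. \<forall>N::nat. \<forall>h l.
            (is_minimizer (calH \<beta> N) N h \<longrightarrow>
               \<bar>real h - sqrt (1 - \<beta>) * sqrt (real N)\<bar> \<le> C * root 4 (real N)) \<and>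
            (is_minimizer (calL \<beta> N) N l \<longrightarrow>
               \<bar>real l - sqrt (real N) / sqrt (1 - \<beta>)\<bar> \<le> C * root 4 (real N)))
       \<and> (\<beta> \<notin> \<rat> \<longrightarrow>
            (\<forall>N::nat. \<forall>h h'. is_minimizer (calH \<beta> N) N h \<longrightarrow> is_minimizer (calH \<beta> N) N h' \<longrightarrow> h = h') \<and>
            (\<forall>N::nat. \<forall>l l'. is_minimizer (calL \<beta> N) N l \<longrightarrow> is_minimizer (calL \<beta> N) N l' \<longrightarrow> l = l'))"
proof (intro conjI impI)
  define c where "c = 1 - \<beta>"
  have c: "0 < c" "c < 1" using assms by (auto simp: c_def)
  have b: "\<beta> = 1 - c" by (simp add: c_def)
  show "\<exists>C>0. \<forall>N::nat. \<forall>h l.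
            (is_minimizer (calH \<beta> N) N h \<longrightarrow>
               \<bar>real h - sqrt (1 - \<beta>) * sqrt (real N)\<bar> \<le> C * root 4 (real N)) \<and>
            (is_minimizer (calL \<beta> N) N l \<longrightarrow>
               \<bar>real l - sqrt (real N) / sqrt (1 - \<beta>)\<bar> \<le> C * root 4 (real N))"
  proof (intro exI[of _ "4 / c"] conjI allI impI)
    show "0 < 4 / c" using c by simp
  next
    fix N h assume hm: "is_minimizer (calH \<beta> N) N h"
    hence N: "N \<ge> 1" by (auto simp: is_minimizer_def)
    have "\<bar>real h - sqrt c * sqrt (real N)\<bar> \<le> 3 * root 4 (real N)"
      using H_part[OF c N, of h] hm unfolding b by simp
    moreover have "3 * root 4 (real N) \<le> (4 / c) * root 4 (real N)"
      using c N by (intro mult_right_mono) (auto simp: field_simps)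
    ultimately show "\<bar>real h - sqrt (1 - \<beta>) * sqrt (real N)\<bar> \<le> 4 / c * root 4 (real N)"
      by (simp add: c_def)
  next
    fix N l assume lm: "is_minimizer (calL \<beta> N) N l"
    hence N: "N \<ge> 1" by (auto simp: is_minimizer_def)
    show "\<bar>real l - sqrt (real N) / sqrt (1 - \<beta>)\<bar> \<le> 4 / c * root 4 (real N)"
      using L_part[OF c N, of l] lm unfolding c_def by simp
  qed
next
  assume q: "\<beta> \<notin> \<rat>"
  have cq: "1 - \<beta> \<notin> \<rat>"
  proof
    assume "1 - \<beta> \<in> \<rat>"
    hence "1 - (1 - \<beta>) \<in> \<rat>" by (rule Rats_diff[OF Rats_1])
    hence "\<beta> \<in> \<rat>" by (simp only: diff_diff_eq2 add_diff_cancel_left')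
    thus False using q by blast
  qed
  show "\<forall>N::nat. \<forall>h h'. is_minimizer (calH \<beta> N) N h \<longrightarrow> is_minimizer (calH \<beta> N) N h' \<longrightarrow> h = h'"
  proof (intro allI impI)
    fix N h h' assume "is_minimizer (calH \<beta> N) N h" "is_minimizer (calH \<beta> N) N h'"
    hence "calH \<beta> N h = calH \<beta> N h'" by (rule min_eq)
    thus "h = h'" unfolding calH_def by (intro uniq_aux[OF cq]) (simp add: mult.assoc)
  qed
  show "\<forall>N::nat. \<forall>l l'. is_minimizer (calL \<beta> N) N l \<longrightarrow> is_minimizer (calL \<beta> N) N l' \<longrightarrow> l = l'"
  proof (intro allI impI)
    fix N l l' assume "is_minimizer (calL \<beta> N) N l" "is_minimizer (calL \<beta> N) N l'"
    hence e: "calL \<beta> N l = calL \<beta> N l'" by (rule min_eq)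
    have ne: "1 - \<beta> \<noteq> 0" using assms by simp
    have "2 * of_int \<lceil>real N / real l\<rceil> + 2 * (1 - \<beta>) * real l = 2 * of_int \<lceil>real N / real l'\<rceil> + 2 * (1 - \<beta>) * real l'"
      using e unfolding calL_def by simp
    hence "2 * (1 - \<beta>) * (real l - real l') = 2 * (of_int \<lceil>real N / real l'\<rceil> - of_int \<lceil>real N / real l\<rceil>)"
      by (simp add: algebra_simps)
    show "l = l'"
    proof (rule ccontr)
      assume "l \<noteq> l'"
      hence "real l - real l' \<noteq> 0" by simp
      with \<open>2 * (1 - \<beta>) * (real l - real l') = _\<close>
      have "1 - \<beta> = (of_int \<lceil>real N / real l'\<rceil> - of_int \<lceil>real N / real l\<rceil>) / (real l - real l')"
        by (simp add: field_simps)
      moreover have "(of_int \<lceil>real N / real l'\<rceil> - of_int \<lceil>real N / real l\<rceil>) / (real l - real l') \<in> \<rat>"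
        by (intro Rats_divide Rats_diff Rats_of_nat Rats_of_int)
      ultimately have "1 - \<beta> \<in> \<rat>" by simp
      thus False using cq by simp
    qed
  qed
qed

end
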